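(* Let $k\ge1$ and $n\ge 2^k-1$ be integers, and set $n_2=2^k-1$, $n_1=n-n_2$. Then in the binary symmetric channel with a single error and one-time feedback (after the first $n_1$ symbols), one can transmit $$M_1(n)=2^{n_1}\left\lfloor\frac{2^{n_2}}{n_1+n_2+1}\right\rfloor$$ messages with a single-error-correcting strategy.
   Context: Binary symmetric channel: alphabet $\{0,1\}$, an error replaces a symbol by the other symbol; "a single error" means at most one error in the whole transmission. A strategy with one-time feedback after $n_1$ symbols for messages $m\in[M]$: the first $n_1$ transmitted symbols depend only on $m$; then the encoder learns the $n_1$ received symbols (error-free, instantaneously), and the remaining $n_2$ symbols depend on $m$ and those received symbols. It transmits $M$ messages with a single error if the sets of output sequences reachable from distinct messages with at most one error are pairwise disjoint. *)

theory Defs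
  imports Main
begin

definition hdist :: "bool list \<Rightarrow> bool list \<Rightarrow> nat" where
  "hdist xs ys = length (filter (\<lambda>(a, b). a \<noteq> b) (zip xs ys))"

text \<open>A strategy with one-time feedback after n1 symbols, for messages
m in {..<M}: enc1 m is the first block (length n1), depending only on m;
enc2 m z is the second block (length n2), depending on m and the received
first block z (for every possible received word z of length n1).\<close>

definition fb_strategy ::
  "nat \<Rightarrow> nat \<Rightarrow> nat \<Rightarrow> (nat \<Rightarrow> bool list) \<Rightarrow> (nat \<Rightarrow> bool list \<Rightarrow> bool list) \<Rightarrow> bool" where
  "fb_strategy n1 n2 M enc1 enc2 \<longleftrightarrow>
     (\<forall>m<M. length (enc1 m) = n1 \<and>
        (\<forall>z. length z = n1 \<longrightarrow> length (enc2 m z) = n2))"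

definition fb_outputs ::
  "nat \<Rightarrow> nat \<Rightarrow> (nat \<Rightarrow> bool list) \<Rightarrow> (nat \<Rightarrow> bool list \<Rightarrow> bool list) \<Rightarrow> nat \<Rightarrow> bool list set" where
  "fb_outputs n1 n2 enc1 enc2 m =
     {z1 @ z2 | z1 z2. length z1 = n1 \<and> length z2 = n2 \<and>
        hdist (enc1 m) z1 + hdist (enc2 m z1) z2 \<le> 1}"

definition transmits_single_error ::
  "nat \<Rightarrow> nat \<Rightarrow> nat \<Rightarrow> (nat \<Rightarrow> bool list) \<Rightarrow> (nat \<Rightarrow> bool list \<Rightarrow> bool list) \<Rightarrow> bool" where
  "transmits_single_error n1 n2 M enc1 enc2 \<longleftrightarrow>
     fb_strategy n1 n2 M enc1 enc2 \<and>
     (\<forall>m<M. \<forall>m'<M. m \<noteq> m' \<longrightarrow>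
        fb_outputs n1 n2 enc1 enc2 m \<inter> fb_outputs n1 n2 enc1 enc2 m' = {})"

end

theory Submission
  imports Defs
begin

fun synd :: "nat \<Rightarrow> bool list \<Rightarrow> nat" where
  "synd i [] = 0"
| "synd i (x # xs) = xor (if x then i else 0) (synd (Suc i) xs)"

definition flipj :: "bool list \<Rightarrow> nat \<Rightarrow> bool list" where
  "flipj y j = (if j = 0 then y else y[j - 1 := \<not> y ! (j - 1)])"

definition syn :: "nat \<Rightarrow> bool list \<Rightarrow> nat" where
  "syn k y = take_bit k (synd 1 y)"

definition corr :: "nat \<Rightarrow> bool list \<Rightarrow> bool list" where
  "corr k y = flipj y (syn k y)"

lemma synd_flip:
  "i \<le> j \<Longrightarrow> j < i + length xs \<Longrightarrow>
   synd i (xs[j - i := \<not> xs ! (j - i)]) = xor (synd i xs) j"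
proof (induction xs arbitrary: i)
  case Nil then show ?case by simp
next
  case (Cons x xs)
  show ?case
  proof (cases "j = i")
    case True
    then show ?thesis
      by (cases x) (simp_all add: xor.assoc xor.commute[of i] xor.left_commute[of i])
  next
    case False
    then have "j - i = Suc (j - Suc i)" using Cons.prems by simp
    then show ?thesis using Cons.IH[of "Suc i"] Cons.prems False
      by (simp add: xor.assoc)
  qed
qed

lemma length_flipj[simp]: "length (flipj y j) = length y"
  by (simp add: flipj_def)

lemma flipj_flipj: "j \<le> length y \<Longrightarrow> flipj (flipj y j) j = y"
  by (simp add: flipj_def)

lemma syn_flipj:
  assumes "j \<le> length y" "j < 2 ^ k"
  shows "syn k (flipj y j) = xor (syn k y) j"
proof (cases "j = 0")
  case True then show ?thesis by (simp add: flipj_def)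
next
  case False
  then have "synd 1 (flipj y j) = xor (synd 1 y) j"
    using synd_flip[of 1 j y] assms by (simp add: flipj_def)
  moreover have "take_bit k j = j" using assms(2) by (simp add: take_bit_nat_eq_self_iff)
  ultimately show ?thesis
    by (simp add: syn_def take_bit_xor)
qed

lemma syn_less: "syn k y < 2 ^ k"
  by (simp add: syn_def take_bit_nat_less_exp)

lemma hdist_cons: "hdist (a # xs) (b # ys) = (if a \<noteq> b then 1 else 0) + hdist xs ys"
  by (simp add: hdist_def)

lemma hdist_self: "hdist x x = 0"
  by (induction x) (simp_all add: hdist_def)

lemma hdist_zero: "length x = length y \<Longrightarrow> hdist x y = 0 \<Longrightarrow> x = y"
  by (induction x y rule: list_induct2) (auto simp: hdist_cons split: if_splits)

lemma hdist_one: "length x = length y \<Longrightarrow> hdist x y = 1 \<Longrightarrow>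
   \<exists>i<length x. y = x[i := \<not> x ! i]"
proof (induction x y rule: list_induct2)
  case Nil then show ?case by (simp add: hdist_def)
next
  case (Cons a xs b ys)
  show ?case
  proof (cases "a = b")
    case True
    then have "hdist xs ys = 1" using Cons.prems by (simp add: hdist_cons)
    then obtain i where "i < length xs" "ys = xs[i := \<not> xs ! i]" using Cons.IH by blast
    then show ?thesis using True by (intro exI[of _ "Suc i"]) simp
  next
    case False
    then have "hdist xs ys = 0" using Cons.prems by (simp add: hdist_cons)
    then have "xs = ys" using hdist_zero Cons.hyps by blast
    then show ?thesis using False by (intro exI[of _ 0]) auto
  qed
qed

lemma hdist_flip: "i < length x \<Longrightarrow> hdist x (x[i := \<not> x ! i]) = 1"
proof (induction x arbitrary: i)
  case Nil then show ?case by simp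
next
  case (Cons a x)
  then show ?case by (cases i) (simp_all add: hdist_cons hdist_self)
qed

lemma least_flip: "i < length x \<Longrightarrow> (LEAST l. x[i := \<not> x ! i] ! l \<noteq> x ! l) = i"
  by (rule Least_equality) (auto simp: nth_list_update split: if_split_asm)

lemma hdist_le1: "length x = length y \<Longrightarrow> hdist x y \<le> 1 \<Longrightarrow>
   \<exists>j\<le>length x. y = flipj x j"
proof -
  assume l: "length x = length y" and h: "hdist x y \<le> 1"
  show ?thesis
  proof (cases "hdist x y = 0")
    case True then show ?thesis using hdist_zero[OF l] by (intro exI[of _ 0]) (simp add: flipj_def)
  next
    case False
    then have "hdist x y = 1" using h by simp
    then obtain i where "i < length x" "y = x[i := \<not> x ! i]" using hdist_one[OF l] by blast
    then show ?thesis by (intro exI[of _ "Suc i"]) (simp add: flipj_def)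
  qed
qed


lemma main:
  fixes n1 n2 k B :: nat
  assumes k: "k \<ge> 1" and n2: "n2 = 2 ^ k - 1" and BN: "B * (n1 + n2 + 1) \<le> 2 ^ n2"
  shows "\<exists>enc1 enc2. transmits_single_error n1 n2 (2 ^ n1 * B) enc1 enc2"
proof -
  have "(1::nat) \<le> 2 ^ k" by simp
  then have pk: "2 ^ k = n2 + 1" using n2 by linarith
  define C where "C = {y::bool list. length y = n2 \<and> syn k y = 0}"
  have finC: "finite C"
  proof -
    have "C \<subseteq> {xs. set xs \<subseteq> (UNIV::bool set) \<and> length xs = n2}" by (auto simp: C_def)
    moreover have "finite {xs. set xs \<subseteq> (UNIV::bool set) \<and> length xs = n2}"
      by (rule finite_lists_length_eq) simp
    ultimately show ?thesis by (rule finite_subset)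
  qed
  have inC: "syn k (flipj c j) = j \<and> corr k (flipj c j) = c \<and> length (flipj c j) = n2"
    if "c \<in> C" "j \<le> n2" for c j
  proof -
    have "syn k (flipj c j) = j" using that syn_flipj[of j c k] pk by (simp add: C_def)
    then show ?thesis using that flipj_flipj[of j c] by (simp add: corr_def C_def)
  qed
  have cardC: "2 ^ n2 \<le> card C * (n2 + 1)"
  proof -
    have "{xs. set xs \<subseteq> (UNIV::bool set) \<and> length xs = n2} \<subseteq> (\<lambda>(c, j). flipj c j) ` (C \<times> {..<n2+1})"
    proof
      fix y assume "y \<in> {xs. set xs \<subseteq> (UNIV::bool set) \<and> length xs = n2}"
      then have ly: "length y = n2" by simp
      define j where "j = syn k y"
      have jl: "j < n2 + 1" using syn_less[of k y] pk by (simp add: j_def)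
      have "syn k (flipj y j) = xor j j" using syn_flipj[of j y k] jl ly pk by (simp add: j_def)
      then have "flipj y j \<in> C" using ly by (simp add: C_def)
      moreover have "y = flipj (flipj y j) j" using flipj_flipj[of j y] jl ly by simp
      ultimately show "y \<in> (\<lambda>(c, j). flipj c j) ` (C \<times> {..<n2+1})" using jl by force
    qed
    then have "card {xs. set xs \<subseteq> (UNIV::bool set) \<and> length xs = n2} \<le> card ((\<lambda>(c, j). flipj c j) ` (C \<times> {..<n2+1}))"
      using finC by (intro card_mono) auto
    also have "\<dots> \<le> card (C \<times> {..<n2+1})" by (rule card_image_le) (use finC in auto)
    finally show ?thesis using card_lists_length_eq[of "UNIV::bool set" n2] by (simp add: card_cartesian_product)
  qed
  obtain g where g: "bij_betw g {0..<card C} C" using ex_bij_betw_nat_finite[OF finC] by blast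
  define info where "info = the_inv_into {0..<card C} g"
  have ginfo: "g c \<in> C \<and> info (g c) = c" if "c < card C" for c
  proof
    show "g c \<in> C" using bij_betw_apply[OF g] that by simp
    show "info (g c) = c" unfolding info_def
      using the_inv_into_f_f[OF bij_betw_imp_inj_on[OF g]] that by simp
  qed
  define W1 where "W1 = {xs::bool list. length xs = n1}"
  have cardW1: "card W1 = 2 ^ n1"
    using card_lists_length_eq[of "UNIV::bool set" n1] by (simp add: W1_def)
  have finW1: "finite W1"
    using finite_lists_length_eq[of "UNIV::bool set" n1] by (simp add: W1_def)
  obtain f :: "nat \<Rightarrow> bool list" where f: "bij_betw f {0..<2 ^ n1} W1"
    using ex_bij_betw_nat_finite[OF finW1] unfolding cardW1 by blast
  define idx where "idx = the_inv_into {0..<(2::nat) ^ n1} f"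
  have fidx: "length (f a) = n1 \<and> idx (f a) = a" if "a < 2 ^ n1" for a
  proof
    show "length (f a) = n1" using bij_betw_apply[OF f] that by (simp add: W1_def)
    show "idx (f a) = a" unfolding idx_def
      using the_inv_into_f_f[OF bij_betw_imp_inj_on[OF f]] that by simp
  qed
  define pt where "pt p = flipj (g (B + p div (n2 + 1))) (p mod (n2 + 1))" for p
  define enc1 where "enc1 m = f (m mod 2 ^ n1)" for m
  define enc2 where "enc2 m z = (if z = enc1 m then g (m div 2 ^ n1)
      else if hdist (enc1 m) z = 1 \<and> length z = n1
      then pt ((m div 2 ^ n1) * n1 + (LEAST i. z ! i \<noteq> enc1 m ! i))
      else replicate n2 False)" for m z
  define dec where "dec y = (let z1 = take n1 y; z2 = drop n1 y; c = info (corr k z2); j = syn k z2 in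
      if c < B then idx z1 + 2 ^ n1 * c
      else (let p = (c - B) * (n2 + 1) + j in idx (flipj z1 (Suc (p mod n1))) + 2 ^ n1 * (p div n1)))" for y
  have BC: "B \<le> card C"
  proof -
    have "B * (n2 + 1) \<le> B * (n1 + n2 + 1)" by (intro mult_le_mono2) simp
    then have "B * (n2 + 1) \<le> card C * (n2 + 1)" using BN cardC by linarith
    then show ?thesis using mult_le_cancel2[of B "n2+1" "card C"] by simp
  qed
  have ptC: "B + p div (n2 + 1) < card C" if "p < B * n1" for p
  proof -
    have "p div (n2 + 1) * (n2 + 1) \<le> p" by (rule div_times_less_eq_dividend)
    then have "(B + p div (n2 + 1)) * (n2 + 1) \<le> B * (n2 + 1) + p"
      by (simp add: distrib_right)
    also have "\<dots> < B * (n1 + n2 + 1)" using that by (simp add: distrib_left)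
    also have "\<dots> \<le> card C * (n2 + 1)" using BN cardC by linarith
    finally show ?thesis by (rule mult_less_cancel2[THEN iffD1, THEN conjunct2])
  qed
  have bB: "m div 2 ^ n1 < B" if "m < 2 ^ n1 * B" for m
    using that by (intro less_mult_imp_div_less) (simp add: mult.commute)
  have al: "m mod 2 ^ n1 < 2 ^ n1" for m :: nat
    by (rule mod_less_divisor) simp
  have len1: "length (enc1 m) = n1" if "m < 2 ^ n1 * B" for m
    using fidx al by (simp add: enc1_def)
  have err1: "enc2 m ((enc1 m)[i := \<not> enc1 m ! i]) = pt ((m div 2 ^ n1) * n1 + i)
      \<and> (m div 2 ^ n1) * n1 + i < B * n1"
    if m: "m < 2 ^ n1 * B" and i: "i < n1" for m i
  proof -
    let ?A = "enc1 m"
    have lA: "length ?A = n1" using len1[OF m] .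
    have ne: "?A[i := \<not> ?A ! i] \<noteq> ?A" using i lA
      by (metis list_update_same_conv nth_list_update_eq)
    have "(m div 2 ^ n1) * n1 + i < (m div 2 ^ n1) * n1 + n1" using i by simp
    also have "\<dots> = (m div 2 ^ n1 + 1) * n1" by simp
    also have "\<dots> \<le> B * n1" using bB[OF m] by (intro mult_le_mono1) simp
    finally show ?thesis using ne hdist_flip[of i ?A] least_flip[of i ?A] i lA
      by (simp add: enc2_def)
  qed
  have strat: "fb_strategy n1 n2 (2 ^ n1 * B) enc1 enc2"
    unfolding fb_strategy_def
  proof (intro allI impI conjI)
    fix m assume m: "m < 2 ^ n1 * B"
    show "length (enc1 m) = n1" using len1[OF m] .
    fix z :: "bool list" assume lz: "length z = n1"
    show "length (enc2 m z) = n2"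
    proof (cases "z = enc1 m")
      case True
      then show ?thesis using ginfo[of "m div 2 ^ n1"] bB[OF m] BC by (simp add: enc2_def C_def)
    next
      case False
      show ?thesis
      proof (cases "hdist (enc1 m) z = 1")
        case True
        then obtain i where i: "i < n1" "z = (enc1 m)[i := \<not> enc1 m ! i]"
          using hdist_one[of "enc1 m" z] len1[OF m] lz by auto
        then show ?thesis using err1[OF m i(1)] ptC ginfo
          by (simp add: pt_def C_def)
      next
        case False
        then show ?thesis using \<open>z \<noteq> enc1 m\<close> by (simp add: enc2_def)
      qed
    qed
  qed
  have decode: "dec y = m" if m: "m < 2 ^ n1 * B" and y: "y \<in> fb_outputs n1 n2 enc1 enc2 m" for m y
  proof -
    obtain z1 z2 where y: "y = z1 @ z2" and l1: "length z1 = n1" and l2: "length z2 = n2"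
      and h: "hdist (enc1 m) z1 + hdist (enc2 m z1) z2 \<le> 1"
      using y by (auto simp: fb_outputs_def)
    have tk: "take n1 y = z1" "drop n1 y = z2" using y l1 by auto
    let ?A = "enc1 m" and ?b = "m div 2 ^ n1" and ?a = "m mod 2 ^ n1"
    have lA: "length ?A = n1" using len1[OF m] .
    have idxA: "idx ?A = ?a" using fidx[OF al] by (simp add: enc1_def)
    have mab: "m = ?a + 2 ^ n1 * ?b" by simp
    show ?thesis
    proof (cases "hdist ?A z1 = 0")
      case True
      then have z1: "z1 = ?A" using hdist_zero lA l1 by metis
      have gb: "g ?b \<in> C" "info (g ?b) = ?b" using ginfo[of ?b] bB[OF m] BC by auto
      have "enc2 m z1 = g ?b" using z1 by (simp add: enc2_def)
      then have "hdist (g ?b) z2 \<le> 1" using h True by simp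
      then obtain j where j: "j \<le> n2" "z2 = flipj (g ?b) j"
        using hdist_le1[of "g ?b" z2] gb l2 by (auto simp: C_def)
      have "corr k z2 = g ?b" using inC[OF gb(1) j(1)] j(2) by simp
      then show ?thesis using tk z1 idxA gb bB[OF m] by (simp add: dec_def Let_def)
    next
      case False
      then have h1: "hdist ?A z1 = 1" and h0: "hdist (enc2 m z1) z2 = 0" using h by auto
      obtain i where i: "i < n1" "z1 = ?A[i := \<not> ?A ! i]"
        using hdist_one[OF _ h1] lA l1 by auto
      define p where "p = ?b * n1 + i"
      have e2: "enc2 m z1 = pt p" and pB: "p < B * n1" using err1[OF m i(1)] i(2) p_def by auto
      define c where "c = B + p div (n2 + 1)"
      have cC: "g c \<in> C" "info (g c) = c" using ginfo ptC[OF pB] c_def by auto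
      have "length (enc2 m z1) = n2" using e2 cC by (simp add: pt_def C_def c_def)
      then have z2: "z2 = flipj (g c) (p mod (n2 + 1))"
        using hdist_zero[of "enc2 m z1" z2] h0 l2 e2 by (simp add: pt_def c_def)
      have sc: "syn k z2 = p mod (n2 + 1)" "corr k z2 = g c" using inC[OF cC(1), of "p mod (n2+1)"] z2 by auto
      have pp: "(c - B) * (n2 + 1) + p mod (n2 + 1) = p" using div_mult_mod_eq[of p "n2+1"] by (simp add: c_def)
      have pm: "p mod n1 = i" "p div n1 = ?b" using i(1) by (auto simp: p_def)
      have fz: "flipj z1 (Suc i) = ?A" using i lA by (simp add: flipj_def)
      show ?thesis using tk sc cC pp pm fz idxA
        by (simp add: dec_def Let_def c_def)
    qed
  qed
  have "transmits_single_error n1 n2 (2 ^ n1 * B) enc1 enc2"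
    unfolding transmits_single_error_def
  proof (intro conjI strat allI impI)
    fix m m' assume m: "m < 2 ^ n1 * B" and m': "m' < 2 ^ n1 * B" and ne: "m \<noteq> m'"
    show "fb_outputs n1 n2 enc1 enc2 m \<inter> fb_outputs n1 n2 enc1 enc2 m' = {}"
      using decode[OF m] decode[OF m'] ne by blast
  qed
  then show ?thesis by blast
qed

theorem corollary1:
  fixes k n :: nat
  assumes "k \<ge> 1" and "n \<ge> 2 ^ k - 1"
  shows "let n2 = 2 ^ k - 1; n1 = n - n2 in
         \<exists>enc1 enc2. transmits_single_error n1 n2
            (2 ^ n1 * ((2 ^ n2) div (n1 + n2 + 1))) enc1 enc2"
proof -
  define n2 where "n2 = (2::nat) ^ k - 1"
  define n1 where "n1 = n - n2"
  have "(2 ^ n2 div (n1 + n2 + 1)) * (n1 + n2 + 1) \<le> (2::nat) ^ n2"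
    by (rule div_times_less_eq_dividend)
  then have "\<exists>enc1 enc2. transmits_single_error n1 n2 (2 ^ n1 * ((2 ^ n2) div (n1 + n2 + 1))) enc1 enc2"
    using main[OF assms(1) n2_def] by blast
  then show ?thesis by (simp add: Let_def n1_def n2_def)
qed

end
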